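(* Let $k\ge 1$, let $a_0,\dots,a_{k-1}\in\mathbb{Q}$ with $a_0\neq 0$, and let $u:\mathbb{N}_0\to\mathbb{Q}$ be the linear recurrence sequence with given initial values $u(0),\dots,u(k-1)\in\mathbb{Q}$ and $u(n+k)=\sum_{i=0}^{k-1}a_i\,u(n+i)$ for all $n\ge 0$. Define sequences $x_0,\dots,x_{k-1}:\mathbb{N}_0\to\mathbb{Q}$ by the initial values $$x_0(0)=u(0),\qquad x_i(0)=u(i)\cdot\prod_{\ell=0}^{i-1}x_\ell(0)\quad(1\le i<k),$$ and the recurrences, for all $n\ge 0$, $$x_i(n+1)=x_{i+1}(n)\quad(0\le i<k-1),\qquad x_{k-1}(n+1)=\sum_{i=0}^{k-1}a_i\,x_i(n)\prod_{\ell=i}^{k-1}x_\ell(n).$$ Define sequences $s_0,\dots,s_{k-1}:\mathbb{N}_0\to\mathbb{Q}$ by $s_0(0)=1$, $s_i(0)=\prod_{\ell=0}^{i-1}x_\ell(0)$ for $1\le i<k$, and for all $n\ge0$: $s_i(n+1)=s_{i+1}(n)$ for $0\le i<k-1$ and $s_{k-1}(n+1)=s_{k-1}(n)\cdot x_{k-1}(n)$. Then for all $n\ge 0$ and all $0\le i<k$, $$x_i(n)=s_i(n)\cdot u(n+i)\qquad\text{and}\qquad s_i(n)=\prod_{\ell=0}^{n-1}x_0(\ell)\cdot\prod_{\ell=0}^{i-1}x_\ell(n),$$ where empty products equal $1$. *)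

theory Defs
  imports Complex_Main
begin

end

theory Submission
  imports Defs
begin

lemma prod_split_lt:
  "(\<Prod>l<n+i. (X::nat\<Rightarrow>rat) l) = (\<Prod>l<n. X l) * (\<Prod>l<i. X (n+l))"
  by (induction i) (auto simp: lessThan_Suc)

lemma prod_tail:
  assumes "i \<le> k" "1 \<le> k"
  shows "(\<Prod>l<n+i. (X::nat\<Rightarrow>rat) l) * (\<Prod>l\<in>{i..k-1}. X (n+l)) = (\<Prod>l<n+k. X l)"
proof -
  have e: "{i..k-1} = {0+i..<(k-i)+i}" using assms by auto
  have "(\<Prod>l\<in>{i..k-1}. X (n+l)) = (\<Prod>l\<in>{0..<k-i}. X (n+(l+i)))"
    unfolding e by (rule prod.shift_bounds_nat_ivl)
  also have "\<dots> = (\<Prod>l<k-i. X ((n+i)+l))"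
    by (simp add: atLeast0LessThan algebra_simps)
  finally have "(\<Prod>l<n+i. X l) * (\<Prod>l\<in>{i..k-1}. X (n+l)) = (\<Prod>l<(n+i)+(k-i). X l)"
    using prod_split_lt[of X "n+i" "k-i"] by simp
  then show ?thesis using assms by simp
qed

theorem lemma3p2:
  fixes k :: nat and a u :: "nat \<Rightarrow> rat" and x s :: "nat \<Rightarrow> nat \<Rightarrow> rat"
  assumes k: "k \<ge> 1"
    and a0: "a 0 \<noteq> 0"
    and u_rec: "\<forall>n. u (n + k) = (\<Sum>i<k. a i * u (n + i))"
    and x_init0: "x 0 0 = u 0"
    and x_init: "\<forall>i. 1 \<le> i \<and> i < k \<longrightarrow> x i 0 = u i * (\<Prod>l<i. x l 0)"
    and x_shift: "\<forall>n i. i < k - 1 \<longrightarrow> x i (Suc n) = x (Suc i) n"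
    and x_last: "\<forall>n. x (k - 1) (Suc n) = (\<Sum>i<k. a i * x i n * (\<Prod>l\<in>{i..k - 1}. x l n))"
    and s_init0: "s 0 0 = 1"
    and s_init: "\<forall>i. 1 \<le> i \<and> i < k \<longrightarrow> s i 0 = (\<Prod>l<i. x l 0)"
    and s_shift: "\<forall>n i. i < k - 1 \<longrightarrow> s i (Suc n) = s (Suc i) n"
    and s_last: "\<forall>n. s (k - 1) (Suc n) = s (k - 1) n * x (k - 1) n"
  shows "\<forall>n i. i < k \<longrightarrow>
           x i n = s i n * u (n + i) \<and>
           s i n = (\<Prod>l<n. x 0 l) * (\<Prod>l<i. x l n)"
proof -
  define K where "K = k - 1"
  have kK: "k = Suc K" using k K_def by simp
  have xX: "x i n = x 0 (n+i)" if "i < k" for i n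
    using that
  proof (induction i arbitrary: n)
    case 0 then show ?case by simp
  next
    case (Suc i)
    have "x (Suc i) n = x i (Suc n)" using x_shift Suc.prems by auto
    also have "\<dots> = x 0 (Suc n + i)" using Suc by simp
    finally show ?case by simp
  qed
  have sS: "s i n = s 0 (n+i)" if "i < k" for i n
    using that
  proof (induction i arbitrary: n)
    case 0 then show ?case by simp
  next
    case (Suc i)
    have "s (Suc i) n = s i (Suc n)" using s_shift Suc.prems by auto
    also have "\<dots> = s 0 (Suc n + i)" using Suc by simp
    finally show ?case by simp
  qed
  have Sprod: "s 0 m = (\<Prod>l<m. x 0 l)" for m
  proof (induction m)
    case 0 then show ?case using s_init0 by simp
  next
    case (Suc m)
    show ?case
    proof (cases "Suc m < k")
      case True
      have "s 0 (Suc m) = s (Suc m) 0" using sS[OF True, of 0] by simp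
      also have "\<dots> = (\<Prod>l<Suc m. x l 0)" using s_init True by auto
      also have "\<dots> = (\<Prod>l<Suc m. x 0 l)"
      proof (rule prod.cong[OF refl])
        fix l assume "l \<in> {..<Suc m}"
        then have "l < k" using True by auto
        then show "x l 0 = x 0 l" using xX[of l 0] by simp
      qed
      finally show ?thesis .
    next
      case False
      define n where "n = m - K"
      have m: "m = n + K" using False kK n_def by simp
      have "s 0 (Suc m) = s K (Suc n)" using sS[of K "Suc n"] kK m by simp
      also have "\<dots> = s K n * x K n" using s_last K_def by simp
      also have "\<dots> = s 0 m * x 0 m" using sS[of K n] xX[of K n] kK m by simp
      finally show ?thesis using Suc by simp
    qed
  qed
  have XS: "x 0 m = s 0 m * u m" for m
  proof (induction m rule: less_induct)
    case (less m)
    show ?case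
    proof (cases "m < k")
      case True
      show ?thesis
      proof (cases "m = 0")
        case True then show ?thesis using x_init0 s_init0 by simp
      next
        case False
        have "x 0 m = x m 0" using xX[OF \<open>m < k\<close>, of 0] by simp
        also have "\<dots> = u m * (\<Prod>l<m. x l 0)" using x_init False True by auto
        also have "(\<Prod>l<m. x l 0) = (\<Prod>l<m. x 0 l)"
        proof (rule prod.cong[OF refl])
          fix l assume "l \<in> {..<m}"
          then have "l < k" using True by auto
          then show "x l 0 = x 0 l" using xX[of l 0] by simp
        qed
        finally show ?thesis using Sprod by simp
      qed
    next
      case False
      define n where "n = m - k"
      have m: "m = n + k" using False n_def by simp
      have "x 0 m = x K (Suc n)" using xX[of K "Suc n"] kK m by simp
      also have "\<dots> = (\<Sum>i<k. a i * x i n * (\<Prod>l\<in>{i..k - 1}. x l n))"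
        using x_last K_def by simp
      also have "\<dots> = (\<Sum>i<k. a i * u (n+i) * s 0 m)"
      proof (rule sum.cong)
        fix i assume i: "i \<in> {..<k}"
        have "x i n = s 0 (n+i) * u (n+i)"
          using xX[of i n] i less[of "n+i"] m by auto
        moreover have "(\<Prod>l\<in>{i..k - 1}. x l n) = (\<Prod>l\<in>{i..k - 1}. x 0 (n+l))"
        proof (rule prod.cong[OF refl])
          fix l assume "l \<in> {i..k - 1}"
          then have "l < k" using kK by auto
          then show "x l n = x 0 (n+l)" using xX[of l n] by simp
        qed
        moreover have "s 0 (n+i) * (\<Prod>l\<in>{i..k - 1}. x 0 (n+l)) = s 0 m"
          using prod_tail[where i=i and k=k and n=n and X="x 0"] i k Sprod m by simp
        ultimately show "a i * x i n * (\<Prod>l\<in>{i..k - 1}. x l n) = a i * u (n+i) * s 0 m"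
          by (metis mult.assoc mult.commute)
      qed simp
      also have "\<dots> = s 0 m * u m"
        using u_rec m by (simp add: sum_distrib_left sum_distrib_right mult_ac)
      finally show ?thesis .
    qed
  qed
  show ?thesis
  proof (intro allI impI conjI)
    fix n i assume i: "i < k"
    show "x i n = s i n * u (n + i)" using xX[OF i] sS[OF i] XS by simp
    have "s i n = (\<Prod>l<n+i. x 0 l)" using sS[OF i] Sprod by simp
    also have "\<dots> = (\<Prod>l<n. x 0 l) * (\<Prod>l<i. x 0 (n+l))" by (rule prod_split_lt)
    also have "(\<Prod>l<i. x 0 (n+l)) = (\<Prod>l<i. x l n)"
    proof (rule prod.cong[OF refl])
      fix l assume "l \<in> {..<i}"
      then have "l < k" using i by auto
      then show "x 0 (n+l) = x l n" using xX[of l n] by simp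
    qed
    finally show "s i n = (\<Prod>l<n. x 0 l) * (\<Prod>l<i. x l n)" .
  qed
qed

end
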